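(* Fix a nonempty $A\subseteq S$ and $w\in A$, and let $E_0=\{\tau_{\mathcal E_N^w}=\tau_{\mathcal E_N(A)}\}$. Let $x,y\in S$ be distinct with $r(x,y)>r(y,x)=0$. Then, as $N\to\infty$, $$\big|\mathbb P_{\zeta_1^{x,y}}[E_0]-\mathbb P_{\xi_N^y}[E_0]\big|=O(d_N\log N)\quad\text{and}\quad\big|\mathbb P_{\zeta_{N-1}^{x,y}}[E_0]-\mathbb P_{\xi_N^y}[E_0]\big|=O(d_N).$$
   Context: $S$ is finite; $r:S\times S\to[0,\infty)$, $r(x,x)=0$, are the rates of an irreducible continuous-time Markov chain on $S$. $\mathcal H_N=\{\eta\in\{0,1,2,\dots\}^S:\sum_x\eta_x=N\}$; $\sigma^{x,y}\eta$ moves one particle from $x$ to $y$ (if $\eta_x\ge1$; else $\sigma^{x,y}\eta=\eta$). With $d_N>0$, $d_N\to0$, the inclusion process is the Markov chain on $\mathcal H_N$ with generator $(\mathcal L_NF)(\eta)=\sum_{x\ne y}\eta_x(d_N+\eta_y)r(x,y)\{F(\sigma^{x,y}\eta)-F(\eta)\}$; $\mathbb P_\eta$ its law from $\eta$; $\tau_{\mathcal C}$ the hitting time of $\mathcal C\subseteq\mathcal H_N$. $\xi_N^z$: all $N$ particles at $z$; $\mathcal E_N^z=\{\xi_N^z\}$, $\mathcal E_N(A)=\bigcup_{z\in A}\mathcal E_N^z$. For $0\le i\le N$, $\zeta_i^{x,y}$ is the configuration with $N-i$ particles at $x$, $i$ at $y$, none elsewhere. $O(\cdot)$ has constant independent of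 $N$. *)

theory Defs
  imports "HOL-Analysis.Analysis" "HOL-Library.Landau_Symbols"
begin

definition irreducible_rates :: "('a \<Rightarrow> 'a \<Rightarrow> real) \<Rightarrow> bool" where
  "irreducible_rates r \<longleftrightarrow> (\<forall>x y. (x, y) \<in> {(a, b). r a b > 0}\<^sup>*)"

definition sigma :: "'a \<Rightarrow> 'a \<Rightarrow> ('a \<Rightarrow> nat) \<Rightarrow> ('a \<Rightarrow> nat)" where
  "sigma x y \<eta> = (if \<eta> x \<ge> 1
     then (\<lambda>z. \<eta> z - (if z = x then 1 else 0) + (if z = y then 1 else 0)) else \<eta>)"

definition incl_rate :: "real \<Rightarrow> ('a::finite \<Rightarrow> 'a \<Rightarrow> real) \<Rightarrow> ('a \<Rightarrow> nat) \<Rightarrow> ('a \<Rightarrow> nat) \<Rightarrow> real" where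
  "incl_rate d r \<eta> \<zeta> = (if \<zeta> = \<eta> then 0 else
     (\<Sum>(x, y) \<in> {(x, y). x \<noteq> y \<and> sigma x y \<eta> = \<zeta>}.
        real (\<eta> x) * (d + real (\<eta> y)) * r x y))"

definition incl_total :: "real \<Rightarrow> ('a::finite \<Rightarrow> 'a \<Rightarrow> real) \<Rightarrow> ('a \<Rightarrow> nat) \<Rightarrow> real" where
  "incl_total d r \<eta> = (\<Sum>(x, y) \<in> {(x, y). x \<noteq> y \<and> sigma x y \<eta> \<noteq> \<eta>}.
        real (\<eta> x) * (d + real (\<eta> y)) * r x y)"

definition incl_jump :: "real \<Rightarrow> ('a::finite \<Rightarrow> 'a \<Rightarrow> real) \<Rightarrow> ('a \<Rightarrow> nat) \<Rightarrow> ('a \<Rightarrow> nat) \<Rightarrow> real" where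
  "incl_jump d r \<eta> \<zeta> = incl_rate d r \<eta> \<zeta> / incl_total d r \<eta>"

text \<open>hit_upto d r B C n \<eta>: probability, starting from \<eta>, that the set C is hit within
  n jumps and that the state at the hitting time of C lies in B.\<close>
fun hit_upto :: "real \<Rightarrow> ('a::finite \<Rightarrow> 'a \<Rightarrow> real) \<Rightarrow> ('a \<Rightarrow> nat) set \<Rightarrow> ('a \<Rightarrow> nat) set
      \<Rightarrow> nat \<Rightarrow> ('a \<Rightarrow> nat) \<Rightarrow> real" where
  "hit_upto d r B C 0 \<eta> = (if \<eta> \<in> B then 1 else 0)"
| "hit_upto d r B C (Suc n) \<eta> =
     (if \<eta> \<in> C then (if \<eta> \<in> B then 1 else 0)
      else (\<Sum>\<zeta> \<in> (\<lambda>(x, y). sigma x y \<eta>) ` UNIV. incl_jump d r \<eta> \<zeta> * hit_upto d r B C n \<zeta>))"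

text \<open>For B \<subseteq> C: P_\<eta>[\<tau>_B = \<tau>_C < \<infinity>] for the inclusion process with parameter d.
  (Hitting probabilities of the continuous-time chain coincide with those of its jump chain.)\<close>
definition hit_prob :: "real \<Rightarrow> ('a::finite \<Rightarrow> 'a \<Rightarrow> real) \<Rightarrow> ('a \<Rightarrow> nat) set \<Rightarrow> ('a \<Rightarrow> nat) set
      \<Rightarrow> ('a \<Rightarrow> nat) \<Rightarrow> real" where
  "hit_prob d r B C \<eta> = lim (\<lambda>n. hit_upto d r B C n \<eta>)"

definition xi :: "nat \<Rightarrow> 'a \<Rightarrow> ('a \<Rightarrow> nat)" where
  "xi N z = (\<lambda>u. if u = z then N else 0)"

definition zeta :: "nat \<Rightarrow> nat \<Rightarrow> 'a \<Rightarrow> 'a \<Rightarrow> ('a \<Rightarrow> nat)" where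
  "zeta N i x y = (\<lambda>u. if u = x then N - i else if u = y then i else 0)"

end

theory Submission
  imports Defs "HOL-Analysis.Harmonic_Numbers"
begin

definition Im :: "('a::finite \<Rightarrow> nat) \<Rightarrow> ('a \<Rightarrow> nat) set" where
  "Im \<eta> = (\<lambda>(x, y). sigma x y \<eta>) ` UNIV"

lemma finite_Im [simp]: "finite (Im \<eta>)"
  unfolding Im_def by simp

lemma hit_upto_Suc': "hit_upto d r B C (Suc n) \<eta> =
     (if \<eta> \<in> C then (if \<eta> \<in> B then 1 else 0)
      else (\<Sum>\<zeta> \<in> Im \<eta>. incl_jump d r \<eta> \<zeta> * hit_upto d r B C n \<zeta>))"
  unfolding Im_def by simp

lemma term_nonneg:
  assumes "d \<ge> 0" "\<And>a b. r a b \<ge> (0::real)"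
  shows "0 \<le> real (\<eta> a) * (d + real (\<eta> b)) * r a b"
  using assms by (intro mult_nonneg_nonneg) auto

lemma rate_nonneg:
  assumes "d \<ge> 0" "\<And>a b. r a b \<ge> (0::real)"
  shows "0 \<le> incl_rate d r \<eta> \<zeta>"
  unfolding incl_rate_def using term_nonneg[OF assms]
  by (auto intro!: sum_nonneg)

lemma total_nonneg:
  assumes "d \<ge> 0" "\<And>a b. r a b \<ge> (0::real)"
  shows "0 \<le> incl_total d r \<eta>"
  unfolding incl_total_def using term_nonneg[OF assms]
  by (auto intro!: sum_nonneg)

lemma jump_nonneg:
  assumes "d \<ge> 0" "\<And>a b. r a b \<ge> (0::real)"
  shows "0 \<le> incl_jump d r \<eta> \<zeta>"
  unfolding incl_jump_def
  by (rule divide_nonneg_nonneg[OF rate_nonneg[where r=r, OF assms] total_nonneg[where r=r, OF assms]])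

lemma sum_rate:
  fixes r :: "'a::finite \<Rightarrow> 'a \<Rightarrow> real"
  shows "(\<Sum>\<zeta>\<in>Im \<eta>. incl_rate d r \<eta> \<zeta>) = incl_total d r \<eta>"
proof -
  define S where "S = {(x, y). x \<noteq> y \<and> sigma x y \<eta> \<noteq> \<eta>}"
  define g where "g = (\<lambda>(x::'a, y::'a). sigma x y \<eta>)"
  define h where "h = (\<lambda>(x, y). real (\<eta> x) * (d + real (\<eta> y)) * r x y)"
  have "incl_rate d r \<eta> \<zeta> = sum h {p. p \<in> S \<and> g p = \<zeta>}" for \<zeta>
  proof (cases "\<zeta> = \<eta>")
    case True
    have e: "{p. p \<in> S \<and> g p = \<eta>} = {}" by (auto simp: S_def g_def)
    show ?thesis using True by (simp add: incl_rate_def e)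
  next
    case False
    then have "{p. p \<in> S \<and> g p = \<zeta>} = {(x, y). x \<noteq> y \<and> sigma x y \<eta> = \<zeta>}"
      by (auto simp: S_def g_def)
    then show ?thesis using False by (simp add: incl_rate_def h_def)
  qed
  then have "(\<Sum>\<zeta>\<in>Im \<eta>. incl_rate d r \<eta> \<zeta>) = (\<Sum>\<zeta>\<in>Im \<eta>. sum h {p. p \<in> S \<and> g p = \<zeta>})"
    by simp
  also have "\<dots> = sum h S"
    by (rule sum.group) (auto simp: Im_def g_def)
  also have "\<dots> = incl_total d r \<eta>" by (simp add: incl_total_def S_def h_def)
  finally show ?thesis .
qed

lemma sum_jump_le1:
  fixes r :: "'a::finite \<Rightarrow> 'a \<Rightarrow> real"
  shows "(\<Sum>\<zeta>\<in>Im \<eta>. incl_jump d r \<eta> \<zeta>) \<le> 1"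
proof -
  have "(\<Sum>\<zeta>\<in>Im \<eta>. incl_jump d r \<eta> \<zeta>) = incl_total d r \<eta> / incl_total d r \<eta>"
    unfolding incl_jump_def by (simp add: sum_divide_distrib[symmetric] sum_rate)
  also have "\<dots> \<le> 1" by (cases "incl_total d r \<eta> = 0") auto
  finally show ?thesis .
qed


lemma hit_upto_bounds:
  fixes r :: "'a::finite \<Rightarrow> 'a \<Rightarrow> real"
  assumes "d \<ge> 0" "\<And>a b. r a b \<ge> 0"
  shows "0 \<le> hit_upto d r B C n \<eta> \<and> hit_upto d r B C n \<eta> \<le> 1"
proof (induction n arbitrary: \<eta>)
  case 0
  then show ?case by simp
next
  case (Suc n)
  have "0 \<le> (\<Sum>\<zeta> \<in> Im \<eta>. incl_jump d r \<eta> \<zeta> * hit_upto d r B C n \<zeta>)"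
    using Suc jump_nonneg[where r=r, OF assms] by (intro sum_nonneg mult_nonneg_nonneg) auto
  moreover have "(\<Sum>\<zeta> \<in> Im \<eta>. incl_jump d r \<eta> \<zeta> * hit_upto d r B C n \<zeta>)
      \<le> (\<Sum>\<zeta> \<in> Im \<eta>. incl_jump d r \<eta> \<zeta>)"
    using Suc jump_nonneg[where r=r, OF assms] by (intro sum_mono mult_left_le) auto
  moreover note sum_jump_le1[where \<eta>=\<eta> and d=d and r=r]
  ultimately show ?case by (simp only: hit_upto_Suc') auto
qed

lemma hit_upto_mono:
  fixes r :: "'a::finite \<Rightarrow> 'a \<Rightarrow> real"
  assumes "d \<ge> 0" "\<And>a b. r a b \<ge> 0" "B \<subseteq> C"
  shows "hit_upto d r B C n \<eta> \<le> hit_upto d r B C (Suc n) \<eta>"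
proof (induction n arbitrary: \<eta>)
  case 0
  have "0 \<le> (\<Sum>\<zeta> \<in> Im \<eta>. incl_jump d r \<eta> \<zeta> * hit_upto d r B C 0 \<zeta>)"
    using hit_upto_bounds[where r=r, OF assms(1,2)] jump_nonneg[where r=r, OF assms(1,2)]
    by (intro sum_nonneg mult_nonneg_nonneg) auto
  then show ?case using assms(3) by (simp only: hit_upto_Suc') auto
next
  case (Suc n)
  have "(\<Sum>\<zeta> \<in> Im \<eta>. incl_jump d r \<eta> \<zeta> * hit_upto d r B C n \<zeta>)
      \<le> (\<Sum>\<zeta> \<in> Im \<eta>. incl_jump d r \<eta> \<zeta> * hit_upto d r B C (Suc n) \<zeta>)"
    using Suc jump_nonneg[where r=r, OF assms(1,2)] by (intro sum_mono mult_left_mono) auto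
  then show ?case by (simp only: hit_upto_Suc'[of _ _ _ _ "Suc n"] hit_upto_Suc'[of _ _ _ _ "n"]) auto
qed

lemma hit_prob_lim:
  fixes r :: "'a::finite \<Rightarrow> 'a \<Rightarrow> real"
  assumes "d \<ge> 0" "\<And>a b. r a b \<ge> 0" "B \<subseteq> C"
  shows "(\<lambda>n. hit_upto d r B C n \<eta>) \<longlonglongrightarrow> hit_prob d r B C \<eta>"
    and "0 \<le> hit_prob d r B C \<eta>" "hit_prob d r B C \<eta> \<le> 1"
proof -
  have inc: "incseq (\<lambda>n. hit_upto d r B C n \<eta>)"
    using hit_upto_mono[OF assms] by (simp add: incseq_Suc_iff)
  have "convergent (\<lambda>n. hit_upto d r B C n \<eta>)"
  proof -
    have "\<forall>i. hit_upto d r B C i \<eta> \<le> 1"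
      using hit_upto_bounds[where r=r, OF assms(1,2)] by blast
    then obtain L where "(\<lambda>n. hit_upto d r B C n \<eta>) \<longlonglongrightarrow> L"
      using incseq_convergent[OF inc, of 1] by blast
    then show ?thesis by (auto simp: convergent_def)
  qed
  then show L: "(\<lambda>n. hit_upto d r B C n \<eta>) \<longlonglongrightarrow> hit_prob d r B C \<eta>"
    unfolding hit_prob_def by (simp add: convergent_LIMSEQ_iff)
  show "0 \<le> hit_prob d r B C \<eta>"
    using hit_upto_bounds[where r=r, OF assms(1,2)] by (intro LIMSEQ_le_const[OF L]) auto
  show "hit_prob d r B C \<eta> \<le> 1"
    using hit_upto_bounds[where r=r, OF assms(1,2)] by (intro LIMSEQ_le_const2[OF L]) auto
qed

lemma hit_prob_eq:
  fixes r :: "'a::finite \<Rightarrow> 'a \<Rightarrow> real"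
  assumes "d \<ge> 0" "\<And>a b. r a b \<ge> 0" "B \<subseteq> C" "\<eta> \<notin> C"
  shows "hit_prob d r B C \<eta> = (\<Sum>\<zeta> \<in> Im \<eta>. incl_jump d r \<eta> \<zeta> * hit_prob d r B C \<zeta>)"
proof -
  have "(\<lambda>n. hit_upto d r B C (Suc n) \<eta>) \<longlonglongrightarrow> hit_prob d r B C \<eta>"
    using hit_prob_lim(1)[OF assms(1-3)] by (rule LIMSEQ_Suc)
  moreover have "(\<lambda>n. hit_upto d r B C (Suc n) \<eta>) \<longlonglongrightarrow>
      (\<Sum>\<zeta> \<in> Im \<eta>. incl_jump d r \<eta> \<zeta> * hit_prob d r B C \<zeta>)"
    unfolding hit_upto_Suc' using assms(4)
    by (simp, intro tendsto_sum tendsto_mult tendsto_const hit_prob_lim(1)[OF assms(1-3)])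
  ultimately show ?thesis by (rule LIMSEQ_unique)
qed

lemma hit_prob_step:
  fixes r :: "'a::finite \<Rightarrow> 'a \<Rightarrow> real"
  assumes "d \<ge> 0" "\<And>a b. r a b \<ge> 0" "B \<subseteq> C" "\<eta> \<notin> C" "\<eta>' \<in> Im \<eta>"
  shows "\<bar>hit_prob d r B C \<eta> - hit_prob d r B C \<eta>'\<bar> \<le> 1 - incl_jump d r \<eta> \<eta>'"
proof -
  let ?h = "hit_prob d r B C" and ?j = "incl_jump d r \<eta>"
  define R where "R = (\<Sum>\<zeta> \<in> Im \<eta> - {\<eta>'}. ?j \<zeta> * ?h \<zeta>)"
  have eq: "?h \<eta> = ?j \<eta>' * ?h \<eta>' + R"
    unfolding R_def hit_prob_eq[OF assms(1-4)]
    using assms(5) by (simp add: sum.remove)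
  have R0: "0 \<le> R" unfolding R_def
    using jump_nonneg[where r=r, OF assms(1,2)] hit_prob_lim(2)[OF assms(1-3)]
    by (intro sum_nonneg mult_nonneg_nonneg) auto
  have "R \<le> (\<Sum>\<zeta> \<in> Im \<eta> - {\<eta>'}. ?j \<zeta>)" unfolding R_def
    using jump_nonneg[where r=r, OF assms(1,2)] hit_prob_lim(3)[OF assms(1-3)]
    by (intro sum_mono mult_left_le) auto
  also have "\<dots> = (\<Sum>\<zeta> \<in> Im \<eta>. ?j \<zeta>) - ?j \<eta>'"
    using assms(5) by (simp add: sum_diff1)
  finally have R1: "R \<le> 1 - ?j \<eta>'" using sum_jump_le1[where \<eta>=\<eta> and d=d and r=r] by linarith
  have "0 \<le> ?h \<eta>'" "?h \<eta>' \<le> 1" using hit_prob_lim(2,3)[OF assms(1-3)] by auto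
  moreover have "0 \<le> ?j \<eta>'" using jump_nonneg[where r=r, OF assms(1,2)] .
  ultimately have "0 \<le> (1 - ?j \<eta>') * ?h \<eta>'" "(1 - ?j \<eta>') * ?h \<eta>' \<le> 1 - ?j \<eta>'"
    using R0 R1 by (auto intro: mult_nonneg_nonneg mult_left_le)
  then show ?thesis using eq R0 R1 by (auto simp: abs_if algebra_simps)
qed


lemma telescope:
  fixes f :: "nat \<Rightarrow> real"
  assumes "a \<le> b"
  shows "\<bar>f a - f b\<bar> \<le> (\<Sum>i\<in>{a..<b}. \<bar>f i - f (Suc i)\<bar>)"
  using assms
proof (induction b)
  case 0
  then show ?case by simp
next
  case (Suc b)
  show ?case
  proof (cases "a = Suc b")
    case True
    then show ?thesis by simp
  next
    case False
    then have "a \<le> b" using Suc by simp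
    then have "\<bar>f a - f (Suc b)\<bar> \<le> (\<Sum>i\<in>{a..<b}. \<bar>f i - f (Suc i)\<bar>) + \<bar>f b - f (Suc b)\<bar>"
      using Suc.IH by linarith
    then show ?thesis using \<open>a \<le> b\<close> by simp
  qed
qed

lemma sigma_zeta:
  assumes "x \<noteq> y" "i < N"
  shows "sigma x y (zeta N i x y) = zeta N (Suc i) x y"
  using assms by (auto simp: sigma_def zeta_def fun_eq_iff)

lemma zeta_notin:
  assumes "x \<noteq> y" "1 \<le> i" "i < N"
  shows "zeta N i x y \<notin> xi N ` A"
proof
  assume "zeta N i x y \<in> xi N ` A"
  then obtain z where z: "zeta N i x y = xi N z" by auto
  have "zeta N i x y x = xi N z x" "zeta N i x y y = xi N z y" using z by auto
  then show False using assms by (auto simp: zeta_def xi_def split: if_splits)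
qed

lemma jump_bound:
  fixes r :: "'a::finite \<Rightarrow> 'a \<Rightarrow> real"
  assumes r_nonneg: "\<And>a b. r a b \<ge> 0" and d0: "d > 0"
    and xy: "x \<noteq> y" and rxy: "r x y > 0" and ryx: "r y x = 0"
    and i1: "1 \<le> i" and iN: "i < N"
  shows "1 - incl_jump d r (zeta N i x y) (zeta N (Suc i) x y)
     \<le> d * real N * (\<Sum>p\<in>UNIV. case p of (a, b) \<Rightarrow> r a b) / (real i * real (N - i) * r x y)"
proof -
  define \<eta> where "\<eta> = zeta N i x y"
  define \<eta>' where "\<eta>' = zeta N (Suc i) x y"
  define M where "M = (\<Sum>p\<in>UNIV. case p of (a, b) \<Rightarrow> r a b)"
  define S where "S = {(a, b). a \<noteq> b \<and> sigma a b \<eta> \<noteq> \<eta>}"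
  define F where "F = {(a, b). a \<noteq> b \<and> sigma a b \<eta> = \<eta>'}"
  define h where "h = (\<lambda>(a, b). real (\<eta> a) * (d + real (\<eta> b)) * r a b)"
  have ne: "\<eta>' \<noteq> \<eta>" using xy iN by (auto simp: \<eta>_def \<eta>'_def zeta_def fun_eq_iff)
  have sig: "sigma x y \<eta> = \<eta>'" using sigma_zeta[OF xy iN] by (simp add: \<eta>_def \<eta>'_def)
  have FS: "F \<subseteq> S" using ne by (auto simp: F_def S_def)
  have xyF: "(x, y) \<in> F" using sig xy by (simp add: F_def)
  have hnn: "h p \<ge> 0" for p
    using term_nonneg[of d r \<eta>] d0 r_nonneg by (auto simp: h_def split: prod.splits)
  have tot: "incl_total d r \<eta> = sum h S" by (simp add: incl_total_def S_def h_def)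
  have rate: "incl_rate d r \<eta> \<eta>' = sum h F" using ne by (simp add: incl_rate_def F_def h_def)
  have hxy: "h (x, y) = real (N - i) * (d + real i) * r x y"
    using xy by (simp add: h_def \<eta>_def zeta_def)
  have "real (N - i) * real i * r x y \<le> h (x, y)"
    unfolding hxy using d0 rxy by (intro mult_right_mono mult_left_mono) auto
  also have "h (x, y) \<le> sum h F"
    using xyF hnn by (intro member_le_sum) auto
  finally have lowF: "real (N - i) * real i * r x y \<le> sum h F" .
  have pos: "0 < real (N - i) * real i * r x y" using i1 iN rxy by auto
  have eqdiff: "sum h S - sum h F = sum h (S - F)"
    using FS by (simp add: sum_diff)
  have termb: "h p \<le> d * real N * (case p of (a, b) \<Rightarrow> r a b)" if "p \<in> S - F" for p
  proof -
    obtain a b where p: "p = (a, b)" by force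
    have ab: "a \<noteq> b" "sigma a b \<eta> \<noteq> \<eta>" "sigma a b \<eta> \<noteq> \<eta>'"
      using that p by (auto simp: S_def F_def)
    have "\<eta> a \<ge> 1" using ab(2) by (auto simp: sigma_def split: if_splits)
    then have "a = x \<or> a = y" by (auto simp: \<eta>_def zeta_def split: if_splits)
    then show ?thesis
    proof
      assume ax: "a = x"
      then have "b \<noteq> y" using ab sig by auto
      then have "\<eta> b = 0" "\<eta> a = N - i" using ab ax by (auto simp: \<eta>_def zeta_def)
      then have "h p = real (N - i) * d * r a b" by (simp add: h_def p)
      also have "\<dots> \<le> real N * d * r a b"
        using d0 r_nonneg[of a b] by (intro mult_right_mono) auto
      finally show ?thesis by (simp add: p algebra_simps)
    next
      assume ay: "a = y"
      show ?thesis
      proof (cases "b = x")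
        case True
        then show ?thesis using ay ryx by (simp add: h_def p)
      next
        case False
        then have "\<eta> b = 0" "\<eta> a = i" using ab ay xy by (auto simp: \<eta>_def zeta_def)
        then have "h p = real i * d * r a b" by (simp add: h_def p)
        also have "\<dots> \<le> real N * d * r a b"
          using d0 r_nonneg[of a b] iN by (intro mult_right_mono) auto
        finally show ?thesis by (simp add: p algebra_simps)
      qed
    qed
  qed
  have "sum h (S - F) \<le> (\<Sum>p\<in>S - F. d * real N * (case p of (a, b) \<Rightarrow> r a b))"
    using termb by (intro sum_mono) auto
  also have "\<dots> \<le> (\<Sum>p\<in>UNIV. d * real N * (case p of (a, b) \<Rightarrow> r a b))"
    using d0 r_nonneg by (intro sum_mono2) (auto split: prod.splits)
  also have "\<dots> = d * real N * M" by (simp add: M_def sum_distrib_left)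
  finally have up: "sum h S - sum h F \<le> d * real N * M" using eqdiff by simp
  have Fpos: "sum h F > 0" using lowF pos by linarith
  have SF: "sum h F \<le> sum h S" using FS hnn by (intro sum_mono2) auto
  have "1 - incl_jump d r \<eta> \<eta>' = (sum h S - sum h F) / sum h S"
    using Fpos SF by (simp add: incl_jump_def tot rate field_simps)
  also have "\<dots> \<le> (d * real N * M) / sum h S"
    using up Fpos SF by (intro divide_right_mono) auto
  also have "\<dots> \<le> (d * real N * M) / (real (N - i) * real i * r x y)"
  proof -
    have "M \<ge> 0" unfolding M_def using r_nonneg by (intro sum_nonneg) (auto split: prod.splits)
    moreover have "0 < sum h S * (real (N - i) * real i * r x y)"
      by (rule mult_pos_pos[OF _ pos]) (use Fpos SF in linarith)
    ultimately show ?thesis using d0 lowF SF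
      by (intro divide_left_mono mult_nonneg_nonneg) (auto simp del: of_nat_diff)
  qed
  finally show ?thesis by (simp add: \<eta>_def \<eta>'_def M_def mult_ac)
qed


lemma step_bound:
  fixes r :: "'a::finite \<Rightarrow> 'a \<Rightarrow> real"
  assumes r_nonneg: "\<And>a b. r a b \<ge> 0" and d0: "d > 0"
    and xy: "x \<noteq> y" and rxy: "r x y > 0" and ryx: "r y x = 0" and wA: "w \<in> A"
    and i1: "1 \<le> i" and iN: "i < N"
  shows "\<bar>hit_prob d r {xi N w} (xi N ` A) (zeta N i x y)
          - hit_prob d r {xi N w} (xi N ` A) (zeta N (Suc i) x y)\<bar>
     \<le> d * real N * (\<Sum>p\<in>UNIV. case p of (a, b) \<Rightarrow> r a b) / (real i * real (N - i) * r x y)"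
proof -
  have "zeta N (Suc i) x y \<in> Im (zeta N i x y)"
    unfolding Im_def using sigma_zeta[OF xy iN] by (auto intro!: image_eqI[where x="(x, y)"])
  then have "\<bar>hit_prob d r {xi N w} (xi N ` A) (zeta N i x y)
          - hit_prob d r {xi N w} (xi N ` A) (zeta N (Suc i) x y)\<bar>
       \<le> 1 - incl_jump d r (zeta N i x y) (zeta N (Suc i) x y)"
    using wA d0 r_nonneg zeta_notin[OF xy i1 iN]
    by (intro hit_prob_step) auto
  also note jump_bound[OF r_nonneg d0 xy rxy ryx i1 iN]
  finally show ?thesis .
qed

lemma harm_le_ln: "n \<ge> 1 \<Longrightarrow> (harm n :: real) \<le> 1 + ln (real n)"
proof -
  assume "n \<ge> 1"
  then obtain m where m: "n = Suc m" by (cases n) auto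
  have "harm (Suc m) - ln (real (Suc m)) \<le> harm (Suc 0) - ln (real (Suc 0))"
    using decseq_harm_diff_ln unfolding decseq_def by (metis le0)
  also have "\<dots> = 1" by (simp add: harm_Suc harm_def)
  finally show ?thesis using m by simp
qed

lemma sum_recip_bound:
  assumes "N \<ge> 1"
  shows "(\<Sum>i\<in>{1..<N}. real N / (real i * real (N - i))) \<le> 2 * harm N"
proof -
  have eq: "real N / (real i * real (N - i)) = 1 / real i + 1 / real (N - i)" if "i \<in> {1..<N}" for i
    using that by (auto simp: field_simps of_nat_diff)
  have s1: "(\<Sum>i\<in>{1..<N}. 1 / real i) \<le> harm N"
  proof -
    have "(\<Sum>i\<in>{1..<N}. 1 / real i) \<le> (\<Sum>i\<in>{1..N}. 1 / real i)"
      by (intro sum_mono2) auto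
    also have "\<dots> = harm N" by (simp add: harm_def inverse_eq_divide)
    finally show ?thesis .
  qed
  have s2: "(\<Sum>i\<in>{1..<N}. 1 / real (N - i)) = (\<Sum>i\<in>{1..<N}. 1 / real i)"
    by (rule sum.reindex_bij_witness[where i="\<lambda>j. N - j" and j="\<lambda>j. N - j"]) auto
  have "(\<Sum>i\<in>{1..<N}. real N / (real i * real (N - i)))
      = (\<Sum>i\<in>{1..<N}. 1 / real i) + (\<Sum>i\<in>{1..<N}. 1 / real (N - i))"
    using eq by (simp add: sum.distrib)
  also have "\<dots> \<le> 2 * harm N" using s1 s2 by linarith
  finally show ?thesis .
qed


lemma zeta_N: "x \<noteq> y \<Longrightarrow> zeta N N x y = xi N y"
  by (auto simp: zeta_def xi_def fun_eq_iff)

lemma ln_ge1: "N \<ge> 3 \<Longrightarrow> 1 \<le> ln (real N)"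
proof -
  assume "N \<ge> 3"
  then have "exp 1 \<le> real N" using exp_le by linarith
  then have "ln (exp 1) \<le> ln (real N)" using \<open>N \<ge> 3\<close> by (subst ln_le_cancel_iff) auto
  then show ?thesis by simp
qed

theorem lemma4p9:
  fixes r :: "'a::finite \<Rightarrow> 'a \<Rightarrow> real" and d :: "nat \<Rightarrow> real"
    and A :: "'a set" and w x y :: 'a
  assumes r_nonneg: "\<And>a b. r a b \<ge> 0"
    and r_diag: "\<And>a. r a a = 0"
    and irred: "irreducible_rates r"
    and d_pos: "\<And>N. d N > 0"
    and d_lim: "d \<longlonglongrightarrow> 0"
    and A_ne: "A \<noteq> {}" and wA: "w \<in> A"
    and xy: "x \<noteq> y" and rxy: "r x y > 0" and ryx: "r y x = 0"
  shows "(\<lambda>N. \<bar>hit_prob (d N) r {xi N w} (xi N ` A) (zeta N 1 x y)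
              - hit_prob (d N) r {xi N w} (xi N ` A) (xi N y)\<bar>)
           \<in> O(\<lambda>N. d N * ln (real N))
    \<and> (\<lambda>N. \<bar>hit_prob (d N) r {xi N w} (xi N ` A) (zeta N (N - 1) x y)
              - hit_prob (d N) r {xi N w} (xi N ` A) (xi N y)\<bar>)
           \<in> O(\<lambda>N. d N)"
proof -
  define M where "M = (\<Sum>p\<in>UNIV. case p of (a, b) \<Rightarrow> r a b)"
  define K where "K = M / r x y"
  have M0: "M \<ge> 0" unfolding M_def using r_nonneg by (intro sum_nonneg) (auto split: prod.splits)
  have K0: "K \<ge> 0" unfolding K_def using M0 rxy by simp
  define h where "h = (\<lambda>N i. hit_prob (d N) r {xi N w} (xi N ` A) (zeta N i x y))"
  have hxi: "hit_prob (d N) r {xi N w} (xi N ` A) (xi N y) = h N N" for N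
    by (simp add: h_def zeta_N[OF xy])
  have sb: "\<bar>h N i - h N (Suc i)\<bar> \<le> d N * K * (real N / (real i * real (N - i)))"
    if "1 \<le> i" "i < N" for N i
  proof -
    have "\<bar>h N i - h N (Suc i)\<bar> \<le> d N * real N * M / (real i * real (N - i) * r x y)"
      unfolding h_def M_def by (rule step_bound[OF r_nonneg d_pos xy rxy ryx wA that])
    also have "\<dots> = d N * K * (real N / (real i * real (N - i)))"
      by (simp add: K_def field_simps)
    finally show ?thesis .
  qed
  have P1: "\<bar>h N 1 - h N N\<bar> \<le> (4 * K) * norm (d N * ln (real N))" if N3: "N \<ge> 3" for N
  proof -
    have "\<bar>h N 1 - h N N\<bar> \<le> (\<Sum>i\<in>{1..<N}. \<bar>h N i - h N (Suc i)\<bar>)"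
      using N3 by (intro telescope) auto
    also have "\<dots> \<le> (\<Sum>i\<in>{1..<N}. d N * K * (real N / (real i * real (N - i))))"
      by (intro sum_mono sb) auto
    also have "\<dots> = d N * K * (\<Sum>i\<in>{1..<N}. real N / (real i * real (N - i)))"
      by (simp add: sum_distrib_left)
    also have "\<dots> \<le> d N * K * (2 * harm N)"
      using sum_recip_bound[of N] N3 d_pos[of N] K0
      by (intro mult_left_mono mult_nonneg_nonneg) auto
    also have "\<dots> \<le> d N * K * (4 * ln (real N))"
      using harm_le_ln[of N] ln_ge1[OF N3] N3 d_pos[of N] K0
      by (intro mult_left_mono mult_nonneg_nonneg) auto
    also have "\<dots> = (4 * K) * norm (d N * ln (real N))"
      using ln_ge1[OF N3] d_pos[of N] by (simp add: abs_mult)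
    finally show ?thesis .
  qed
  have P2: "\<bar>h N (N - 1) - h N N\<bar> \<le> (2 * K) * norm (d N)" if N3: "N \<ge> 3" for N
  proof -
    have "\<bar>h N (N - 1) - h N (Suc (N - 1))\<bar> \<le> d N * K * (real N / (real (N - 1) * real (N - (N - 1))))"
      using N3 by (intro sb) auto
    also have "\<dots> \<le> d N * K * 2"
    proof -
      have "real N \<le> 2 * real (N - 1)" using N3 by (simp add: of_nat_diff)
      moreover have "real (N - 1) > 0" using N3 by simp
      ultimately have "real N / (real (N - 1) * real (N - (N - 1))) \<le> 2"
        using N3 by (simp add: field_simps)
      then show ?thesis using d_pos[of N] K0 by (intro mult_left_mono mult_nonneg_nonneg) auto
    qed
    finally show ?thesis using N3 d_pos[of N] by (simp add: mult_ac)
  qed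
  show ?thesis
  proof
    show "(\<lambda>N. \<bar>hit_prob (d N) r {xi N w} (xi N ` A) (zeta N 1 x y)
              - hit_prob (d N) r {xi N w} (xi N ` A) (xi N y)\<bar>) \<in> O(\<lambda>N. d N * ln (real N))"
      unfolding hxi
      by (rule bigoI[where c="4 * K"], unfold eventually_at_top_linorder)
         (rule exI[of _ 3], use P1 in \<open>simp add: h_def\<close>)
    show "(\<lambda>N. \<bar>hit_prob (d N) r {xi N w} (xi N ` A) (zeta N (N - 1) x y)
              - hit_prob (d N) r {xi N w} (xi N ` A) (xi N y)\<bar>) \<in> O(\<lambda>N. d N)"
      unfolding hxi
      by (rule bigoI[where c="2 * K"], unfold eventually_at_top_linorder)
         (rule exI[of _ 3], use P2 in \<open>simp add: h_def\<close>)
  qed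
qed

end
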